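(* Let $\delta>0$ and let $x:[0,1]\to\mathbb{D}_{1+\delta}\setminus\dot{\mathbb{D}}$ be a $C^1$ closed curve ($x(0)=x(1)$). Then for any capping disc $u:D\to\mathbb{R}^2$ of $x$, \[ \Big|\int_D u^*\omega-\pi\deg(x)\Big|\le L(x)\,\delta, \] where $\deg(x)\in\mathbb{Z}$ is the winding number of $x$ around the origin and $L(x)$ is the Euclidean length of $x$.
   Context: $\omega=dx\wedge dy$ on $\mathbb{R}^2$; $\mathbb{D}$ is the closed unit disc, $\dot{\mathbb{D}}$ its interior, and $\mathbb{D}_{1+\delta}$ the closed disc of radius $1+\delta$ centered at $0$. A capping disc of $x$ is a map $u$ from the closed unit disc $D$ with $u|_{\partial D}$ parametrizing $x$. *)

theory Defs
  imports "HOL-Complex_Analysis.Complex_Analysis"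
begin

text \<open>We identify R^2 with \<complex>. For a map u with (real) derivative U z at z,
  the pullback of omega = dx wedge dy is det(DU) dx wedge dy, and
  det(U z) = Im (cnj (U z 1) * U z \<i>).\<close>

definition jac_det :: "(complex \<Rightarrow> complex) \<Rightarrow> real" where
  "jac_det L = Im (cnj (L 1) * L \<i>)"

definition pullback_omega_integral :: "(complex \<Rightarrow> complex \<Rightarrow> complex) \<Rightarrow> real" where
  "pullback_omega_integral U = integral (cball 0 1) (\<lambda>z. jac_det (U z))"

end

theory Submission
  imports Defs
begin


lemma has_integral_twiddle_set:
  fixes g :: "'n::euclidean_space \<Rightarrow> 'm::euclidean_space" and h :: "'m \<Rightarrow> 'n" and f :: "'m \<Rightarrow> 'c::banach"
  assumes hg: "\<And>x. h (g x) = x" and gh: "\<And>x. g (h x) = x"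
    and contg: "\<And>x. continuous (at x) g"
    and gb: "\<And>u v. \<exists>w z. g ` cbox u v = cbox w z"
    and hb: "\<And>u v. \<exists>w z. h ` cbox u v = cbox w z"
    and r: "\<And>u v. Henstock_Kurzweil_Integration.content (g ` cbox u v) = Henstock_Kurzweil_Integration.content (cbox u v)"
    and S: "S \<subseteq> cbox a b"
    and f: "(f has_integral i) S"
  shows "((\<lambda>x. f (g x)) has_integral i) (h ` S)"
proof -
  let ?F = "\<lambda>x. if x \<in> S then f x else 0"
  have "(?F has_integral i) (cbox a b)" using S f by simp
  from has_integral_twiddle[where r=1, OF _ hg gh contg gb hb _ this] r
  have "((\<lambda>x. ?F (g x)) has_integral i) (h ` cbox a b)" by simp
  moreover have "(\<lambda>x. ?F (g x)) = (\<lambda>x. if x \<in> h ` S then f (g x) else 0)"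
    by (rule ext) (metis gh hg image_iff)
  ultimately have "((\<lambda>x. if x \<in> h ` S then f (g x) else 0) has_integral i) (h ` cbox a b)" by simp
  moreover have "h ` S \<subseteq> h ` cbox a b" using S by auto
  ultimately show ?thesis by simp
qed

definition c2 :: "real^2 \<Rightarrow> complex" where "c2 v = Complex (v$1) (v$2)"
definition c2i :: "complex \<Rightarrow> real^2" where "c2i z = vector [Re z, Im z]"

lemma c2_c2i[simp]: "c2 (c2i z) = z" by (simp add: c2_def c2i_def)
lemma c2i_c2[simp]: "c2i (c2 v) = v"
  unfolding c2_def c2i_def by (simp add: vec_eq_iff forall_2)

lemma linear_c2: "linear c2"
  by (rule linearI) (simp_all add: c2_def complex_eq_iff)
lemma linear_c2i: "linear c2i"
  by (rule linearI) (simp_all add: c2i_def vec_eq_iff forall_2)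

lemma c2_cbox: "c2 ` cbox u v = cbox (c2 u) (c2 v)"
proof -
  have "c2 ` cbox u v \<subseteq> cbox (c2 u) (c2 v)"
    by (auto simp: cbox_complex_eq c2_def mem_box_cart)
  moreover have "cbox (c2 u) (c2 v) \<subseteq> c2 ` cbox u v"
  proof
    fix z assume "z \<in> cbox (c2 u) (c2 v)"
    then have "c2i z \<in> cbox u v" by (auto simp: cbox_complex_eq c2_def c2i_def mem_box_cart forall_2)
    then show "z \<in> c2 ` cbox u v" by (metis c2_c2i image_eqI)
  qed
  ultimately show ?thesis by blast
qed

lemma c2i_cbox: "c2i ` cbox u v = cbox (c2i u) (c2i v)"
proof -
  have "c2i ` cbox u v = c2i ` cbox (c2 (c2i u)) (c2 (c2i v))" by simp
  also have "\<dots> = c2i ` c2 ` cbox (c2i u) (c2i v)" by (simp only: c2_cbox)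
  also have "\<dots> = cbox (c2i u) (c2i v)" by (simp add: image_image)
  finally show ?thesis .
qed

lemma content_c2: "Henstock_Kurzweil_Integration.content (c2 ` cbox u v) = Henstock_Kurzweil_Integration.content (cbox u v)"
proof (cases "cbox u v = {}")
  case True
  then show ?thesis by simp
next
  case False
  then have ne: "cbox (c2 u) (c2 v) \<noteq> {}" by (metis c2_cbox image_is_empty)
  have "Henstock_Kurzweil_Integration.content (cbox (c2 u) (c2 v)) = (Re (c2 v) - Re (c2 u)) * (Im (c2 v) - Im (c2 u))"
    using ne by (simp add: content_cbox' Basis_complex_def)
  also have "\<dots> = Henstock_Kurzweil_Integration.content (cbox u v)"
    using False by (simp add: content_cbox_cart UNIV_2 c2_def)
  finally show ?thesis by (simp add: c2_cbox)
qed



definition pol :: "real^2 \<Rightarrow> real^2" where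
  "pol v = c2i (complex_of_real (v$1) * cis (2* pi* v$2))"

definition pol' :: "real^2 \<Rightarrow> real^2 \<Rightarrow> real^2" where
  "pol' v = (\<lambda>w. c2i (complex_of_real (w$1) * cis (2* pi* v$2) + complex_of_real (v$1) * ((2* pi* w$2) *\<^sub>R (\<i> * cis (2* pi* v$2)))))"

lemma bl_c2i: "bounded_linear c2i"
  using linear_c2i linear_conv_bounded_linear by blast
lemma bl_c2: "bounded_linear c2"
  using linear_c2 linear_conv_bounded_linear by blast

lemma pol_deriv: "(pol has_derivative pol' v) (at v within S)"
proof -
  have "((\<lambda>v. complex_of_real (v$1) * cis (2* pi* v$2)) has_derivative
     (\<lambda>w. complex_of_real (v$1) * ((2* pi* w$2) *\<^sub>R (\<i> * cis (2* pi* v$2))) + complex_of_real (w$1) * cis (2* pi* v$2))) (at v within S)"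
    by (auto intro!: derivative_eq_intros bounded_linear_imp_has_derivative bounded_linear_vec_nth)
  from bounded_linear.has_derivative[OF bl_c2i this]
  show ?thesis unfolding pol_def pol'_def by (simp add: add.commute)
qed

lemma det_pol': "det (matrix (pol' v)) = 2* pi* v$1"
proof -
  let ?t = "pi * (2 * v $ 2)"
  have e: "cos ?t * cos ?t + sin ?t * sin ?t = 1" by (simp add: sin_cos_squared_add3)
  have "det (matrix (pol' v)) = pi * (v$1 * (2 * (cos ?t * cos ?t))) + pi * (v$1 * (2 * (sin ?t * sin ?t)))"
    by (simp add: det_2 matrix_def pol'_def c2i_def axis_def cis.sel algebra_simps)
  also have "\<dots> = pi * (v$1 * 2) * (cos ?t * cos ?t + sin ?t * sin ?t)" by (simp only: ring_distribs mult_ac)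
  finally show ?thesis by (simp add: e)
qed


lemma cont_compact_integrable:
  fixes f :: "'a::euclidean_space \<Rightarrow> real"
  assumes "compact S" "continuous_on S f"
  shows "f integrable_on S"
proof -
  have "(\<lambda>x. indicator S x *\<^sub>R f x) integrable_on UNIV"
    by (rule integrable_on_lborel[OF borel_integrable_compact[OF assms]])
  moreover have "(\<lambda>x. indicator S x *\<^sub>R f x) = (\<lambda>x. if x \<in> S then f x else 0)"
    by (auto simp: indicator_def)
  ultimately show ?thesis by (simp add: integrable_restrict_UNIV)
qed

lemma cont_compact_abs_integrable:
  fixes f :: "'a::euclidean_space \<Rightarrow> real"
  assumes "compact S" "continuous_on S f"
  shows "f absolutely_integrable_on S"
  unfolding absolutely_integrable_on_def
  using assms by (auto intro!: cont_compact_integrable continuous_intros)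

definition polS :: "(real^2) set" where
  "polS = {v. 0 < v$1 \<and> v$1 \<le> 1 \<and> 0 \<le> v$2 \<and> v$2 < 1}"

lemma c2_pol: "c2 (pol v) = complex_of_real (v$1) * cis (2* pi* v$2)"
  by (simp add: pol_def)

lemma inj_pol: "inj_on pol polS"
proof (rule inj_onI)
  fix v w assume v: "v \<in> polS" and w: "w \<in> polS" and e: "pol v = pol w"
  then have e2: "complex_of_real (v$1) * cis (2* pi* v$2) = complex_of_real (w$1) * cis (2* pi* w$2)"
    by (metis c2_pol)
  then have "norm (complex_of_real (v$1) * cis (2* pi* v$2)) = norm (complex_of_real (w$1) * cis (2* pi* w$2))" by simp
  then have r: "v$1 = w$1" using v w by (simp add: polS_def norm_mult)
  have "Arg2pi (complex_of_real (v$1) * cis (2* pi* v$2)) = 2* pi* v$2"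
    by (rule Arg2pi_unique) (use v in \<open>auto simp: polS_def cis_conv_exp\<close>)
  moreover have "Arg2pi (complex_of_real (w$1) * cis (2* pi* w$2)) = 2* pi* w$2"
    by (rule Arg2pi_unique) (use w in \<open>auto simp: polS_def cis_conv_exp\<close>)
  ultimately have "v$2 = w$2" using e2 by simp
  with r show "v = w" by (simp add: vec_eq_iff forall_2)
qed

lemma pol_image: "pol ` polS = c2i ` (cball 0 1 - {0})"
proof
  show "pol ` polS \<subseteq> c2i ` (cball 0 1 - {0})"
  proof
    fix y assume "y \<in> pol ` polS"
    then obtain v where v: "v \<in> polS" and y: "y = pol v" by auto
    have "c2 y \<in> cball 0 1 - {0}" using v by (auto simp: y c2_pol polS_def norm_mult)
    then show "y \<in> c2i ` (cball 0 1 - {0})" by (metis c2i_c2 image_eqI)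
  qed
next
  show "c2i ` (cball 0 1 - {0}) \<subseteq> pol ` polS"
  proof
    fix y assume "y \<in> c2i ` (cball 0 1 - {0})"
    then obtain z where z: "z \<in> cball 0 1" "z \<noteq> 0" and y: "y = c2i z" by blast
    define v where "v = (vector [norm z, Arg2pi z / (2* pi)] :: real^2)"
    have "v \<in> polS" using z Arg2pi[of z] by (auto simp: v_def polS_def)
    moreover have "c2 (pol v) = z"
      using Arg2pi_eq[of z] by (simp add: c2_pol v_def cis_conv_exp)
    then have "pol v = y" by (metis c2i_c2 y)
    ultimately show "y \<in> pol ` polS" by blast
  qed
qed


lemma neg_hyp: "negligible {x::real^2. x$k = c}"
proof -
  have "axis k (1::real) \<in> Basis" by (auto simp: Basis_vec_def)
  from negligible_standard_hyperplane[OF this, of c] show ?thesis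
    by (simp add: cart_eq_inner_axis)
qed

definition box1 :: "(real^2) set" where "box1 = cbox 0 (vector [1,1])"

lemma polS_eq: "polS = box1 - ({v. v$1 = 0} \<union> {v. v$2 = 1})"
  by (auto simp: polS_def box1_def mem_box_cart forall_2)

lemma polS_lebesgue: "polS \<in> sets lebesgue"
proof -
  have "box1 \<in> sets lebesgue" unfolding box1_def by (rule fmeasurableD[OF lmeasurable_cbox])
  moreover have "{v::real^2. v$1 = 0} \<union> {v. v$2 = 1} \<in> sets lebesgue"
    by (intro negligible_imp_sets negligible_Un neg_hyp)
  ultimately show ?thesis unfolding polS_eq by blast
qed

lemma polar_real2:
  fixes H :: "real^2 \<Rightarrow> real"
  assumes cont: "continuous_on (c2i ` cball 0 1) H"
  shows "integral (c2i ` cball 0 1) H = integral box1 (\<lambda>v. 2* pi* v$1 * H (pol v))"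
proof -
  let ?F = "\<lambda>v. vec (H v) :: real^1"
  have cpt: "compact (c2i ` cball 0 1)"
    by (intro compact_continuous_image linear_continuous_on bl_c2i compact_cball)
  have ai: "H absolutely_integrable_on (c2i ` cball 0 1)"
    by (rule cont_compact_abs_integrable[OF cpt cont])
  have sub: "c2i ` (cball 0 1 - {0}) = c2i ` cball 0 1 - {c2i 0}"
    by (auto, metis c2_c2i)
  have ai2: "H absolutely_integrable_on pol ` polS"
    unfolding pol_image sub
    by (rule iffD1[OF absolutely_integrable_spike_set_eq ai]) (auto intro: negligible_subset[of "{c2i 0}"])
  then have aiF: "?F absolutely_integrable_on pol ` polS"
    by (simp add: absolutely_integrable_on_1_iff)
  have "(\<lambda>x. \<bar>det (matrix (pol' x))\<bar> *\<^sub>R ?F (pol x)) absolutely_integrable_on polS \<and>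
           integral polS (\<lambda>x. \<bar>det (matrix (pol' x))\<bar> *\<^sub>R ?F (pol x)) = integral (pol ` polS) ?F"
    using has_absolute_integral_change_of_variables[OF polS_lebesgue pol_deriv inj_pol, of ?F "integral (pol ` polS) ?F"]
      aiF by blast
  then have "integral polS (\<lambda>x. \<bar>2* pi* x$1\<bar> * H (pol x)) = integral (pol ` polS) H"
    by (simp add: det_pol' integral_on_1_eq vec_eq_iff)
  also have "integral (pol ` polS) H = integral (c2i ` cball 0 1) H"
    unfolding pol_image sub
    by (rule integral_spike_set) (auto intro: negligible_subset[of "{c2i 0}"])
  also have "integral polS (\<lambda>x. \<bar>2* pi* x$1\<bar> * H (pol x)) = integral box1 (\<lambda>x. \<bar>2* pi* x$1\<bar> * H (pol x))"
    by (rule integral_spike_set; rule negligible_subset[of "{v::real^2. v$1 = 0} \<union> {v. v$2 = 1}"])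
       (auto simp: polS_eq intro: negligible_Un neg_hyp)
  also have "\<dots> = integral box1 (\<lambda>x. 2* pi* x$1 * H (pol x))"
    by (rule integral_cong) (auto simp: box1_def mem_box_cart forall_2)
  finally show ?thesis by simp
qed


definition p2 :: "real \<times> real \<Rightarrow> real^2" where "p2 p = vector [fst p, snd p]"
definition p2i :: "real^2 \<Rightarrow> real \<times> real" where "p2i v = (v$1, v$2)"

lemma p2_p2i[simp]: "p2 (p2i v) = v" by (simp add: p2_def p2i_def vec_eq_iff forall_2)
lemma p2i_p2[simp]: "p2i (p2 p) = p" by (simp add: p2_def p2i_def)
lemma linear_p2: "linear p2"
  by (rule linearI) (simp_all add: p2_def vec_eq_iff forall_2)
lemma linear_p2i: "linear p2i"
  by (rule linearI) (simp_all add: p2i_def)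

lemma p2_cbox: "p2 ` cbox u v = cbox (p2 u) (p2 v)"
proof -
  have "p2 ` cbox u v \<subseteq> cbox (p2 u) (p2 v)"
    by (cases u; cases v) (auto simp: p2_def mem_box_cart forall_2 cbox_Pair_eq)
  moreover have "cbox (p2 u) (p2 v) \<subseteq> p2 ` cbox u v"
  proof
    fix z assume "z \<in> cbox (p2 u) (p2 v)"
    then have "p2i z \<in> cbox u v"
      by (cases u; cases v) (auto simp: p2_def p2i_def mem_box_cart forall_2 cbox_Pair_eq)
    then show "z \<in> p2 ` cbox u v" by (metis p2_p2i image_eqI)
  qed
  ultimately show ?thesis by blast
qed

lemma p2i_cbox: "p2i ` cbox u v = cbox (p2i u) (p2i v)"
proof -
  have "p2i ` cbox u v = p2i ` cbox (p2 (p2i u)) (p2 (p2i v))" by simp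
  also have "\<dots> = p2i ` p2 ` cbox (p2i u) (p2i v)" by (simp only: p2_cbox)
  also have "\<dots> = cbox (p2i u) (p2i v)" by (simp add: image_image)
  finally show ?thesis .
qed

lemma content_p2: "Henstock_Kurzweil_Integration.content (p2 ` cbox u v) = Henstock_Kurzweil_Integration.content (cbox u v)"
proof (cases "cbox u v = {}")
  case True
  then show ?thesis by simp
next
  case False
  then have ne: "cbox (p2 u) (p2 v) \<noteq> {}" by (metis p2_cbox image_is_empty)
  obtain a b where u: "u = (a,b)" by fastforce
  obtain c d where v: "v = (c,d)" by fastforce
  show ?thesis
    using ne False unfolding p2_cbox u v
    by (simp add: content_cbox_cart UNIV_2 p2_def content_Pair cbox_Pair_eq_0 content_real)
qed


lemma p2i_box1: "p2i ` box1 = cbox (0,0) (1,1)"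
  by (simp only: box1_def p2i_cbox) (simp add: p2i_def)

lemma polar_complex:
  fixes h :: "complex \<Rightarrow> real"
  assumes cont: "continuous_on (cball 0 1) h"
  shows "integral (cball 0 1) h =
    integral {0..1} (\<lambda>r. integral {0..1} (\<lambda>t. 2* pi* r * h (complex_of_real r * cis (2* pi* t))))"
proof -
  have int: "h integrable_on cball 0 1" by (rule cont_compact_integrable[OF compact_cball cont])
  have box: "cball (0::complex) 1 \<subseteq> cbox (Complex (-1) (-1)) (Complex 1 1)"
  proof
    fix z :: complex assume "z \<in> cball 0 1"
    then have "norm z \<le> 1" by simp
    then show "z \<in> cbox (Complex (-1) (-1)) (Complex 1 1)"
      using abs_Re_le_cmod[of z] abs_Im_le_cmod[of z] by (auto simp: cbox_complex_eq)
  qed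
  have c2c: "continuous (at x) c2" for x by (simp add: linear_continuous_at bl_c2)
  have "((\<lambda>v. h (c2 v)) has_integral integral (cball 0 1) h) (c2i ` cball 0 1)"
    by (rule has_integral_twiddle_set[OF c2i_c2 c2_c2i c2c _ _ content_c2 box integrable_integral[OF int]])
       (use c2_cbox c2i_cbox in blast)+
  then have e1: "integral (cball 0 1) h = integral (c2i ` cball 0 1) (\<lambda>v. h (c2 v))" by (simp add: integral_unique)
  have "continuous_on (c2i ` cball 0 1) (\<lambda>v. h (c2 v))"
    by (rule continuous_on_compose2[OF cont linear_continuous_on[OF bl_c2]]) auto
  from polar_real2[OF this]
  have e2: "integral (c2i ` cball 0 1) (\<lambda>v. h (c2 v)) = integral box1 (\<lambda>v. 2* pi* v$1 * h (c2 (pol v)))" .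
  let ?G = "\<lambda>v. 2* pi* v$1 * h (c2 (pol v))"
  let ?K = "\<lambda>p::real\<times>real. 2* pi* fst p * h (complex_of_real (fst p) * cis (2* pi* snd p))"
  have Kc: "continuous_on (cbox (0,0) (1,1)) ?K"
  proof (intro continuous_intros continuous_on_compose2[OF cont])
    show "(\<lambda>x. complex_of_real (fst x) * cis (2 * pi * snd x)) ` cbox (0, 0) (1, 1) \<subseteq> cball 0 1"
      by (auto simp: cbox_Pair_eq norm_mult)
  qed
  have Gc: "continuous_on box1 ?G"
  proof -
    have "continuous_on box1 (\<lambda>v. ?K (p2i v))"
      by (rule continuous_on_compose2[OF Kc linear_continuous_on]) (auto simp: p2i_box1 intro: bounded_linear_intros linear_conv_bounded_linear[THEN iffD1, OF linear_p2i])
    moreover have "?K (p2i v) = ?G v" for v by (simp add: p2i_def c2_pol)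
    ultimately show ?thesis by simp
  qed
  have p2c: "continuous (at x) p2" for x by (simp add: linear_continuous_at linear_conv_bounded_linear[THEN iffD1, OF linear_p2])
  have Gi: "?G integrable_on box1" using Gc by (simp add: box1_def integrable_continuous)
  have sb: "box1 \<subseteq> cbox 0 (vector [1,1])" by (simp add: box1_def)
  have "((\<lambda>p. ?G (p2 p)) has_integral integral box1 ?G) (p2i ` box1)"
    by (rule has_integral_twiddle_set[OF p2i_p2 p2_p2i p2c _ _ content_p2 sb integrable_integral[OF Gi]])
       (use p2_cbox p2i_cbox in blast)+
  moreover have "?G (p2 p) = ?K p" for p by (simp add: p2_def c2_pol)
  ultimately have "(?K has_integral integral box1 ?G) (cbox (0,0) (1,1))" by (simp add: p2i_box1)
  then have e3: "integral box1 ?G = integral (cbox (0,0) (1,1)) ?K" by (simp add: integral_unique)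
  have e4: "integral (cbox (0,0) (1,1)) ?K = integral (cbox 0 1) (\<lambda>r. integral (cbox 0 1) (\<lambda>t. ?K (r,t)))"
    by (rule integral_prod_continuous[OF Kc])
  show ?thesis using e1 e2 e3 e4 by simp
qed



definition Uap :: "(complex \<Rightarrow> complex \<Rightarrow> complex) \<Rightarrow> complex \<Rightarrow> complex \<Rightarrow> complex" where
  "Uap U z w = Re w *\<^sub>R U z 1 + Im w *\<^sub>R U z \<i>"

lemma linear_expand:
  assumes "linear L"
  shows "L w = Re w *\<^sub>R L 1 + Im w *\<^sub>R L \<i>"
proof -
  have "w = Re w *\<^sub>R 1 + Im w *\<^sub>R \<i>" by (simp add: complex_eq_iff)
  then have "L w = L (Re w *\<^sub>R 1 + Im w *\<^sub>R \<i>)" by simp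
  also have "\<dots> = Re w *\<^sub>R L 1 + Im w *\<^sub>R L \<i>"
    using assms by (simp add: linear_add linear_scale)
  finally show ?thesis .
qed

lemma norm_Im_cnj_mult: "\<bar>Im (cnj a * b)\<bar> \<le> norm a * norm b"
  by (metis abs_Im_le_cmod complex_mod_cnj norm_mult)

lemma norm_Uap_le: "norm (Uap U z w) \<le> (norm (U z 1) + norm (U z \<i>)) * norm w"
proof -
  have "norm (Uap U z w) \<le> \<bar>Re w\<bar> * norm (U z 1) + \<bar>Im w\<bar> * norm (U z \<i>)"
    unfolding Uap_def by (metis norm_scaleR norm_triangle_ineq)
  also have "\<dots> \<le> norm w * norm (U z 1) + norm w * norm (U z \<i>)"
    by (intro add_mono mult_right_mono abs_Re_le_cmod abs_Im_le_cmod) auto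
  finally show ?thesis by (simp add: algebra_simps)
qed

lemma Uap_diff: "Uap U z w - Uap U z' w = Re w *\<^sub>R (U z 1 - U z' 1) + Im w *\<^sub>R (U z \<i> - U z' \<i>)"
  by (simp add: Uap_def algebra_simps)

lemma Uap_minus: "Uap U z w - Uap U z w' = Uap U z (w - w')"
  by (simp add: Uap_def algebra_simps scaleR_diff_left)

lemma norm_Uap_diff_le: "norm (Uap U z w - Uap U z' w) \<le> (norm (U z 1 - U z' 1) + norm (U z \<i> - U z' \<i>)) * norm w"
proof -
  have "norm (Uap U z w - Uap U z' w) \<le> \<bar>Re w\<bar> * norm (U z 1 - U z' 1) + \<bar>Im w\<bar> * norm (U z \<i> - U z' \<i>)"
    unfolding Uap_diff by (metis norm_scaleR norm_triangle_ineq)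
  also have "\<dots> \<le> norm w * norm (U z 1 - U z' 1) + norm w * norm (U z \<i> - U z' \<i>)"
    by (intro add_mono mult_right_mono abs_Re_le_cmod abs_Im_le_cmod) auto
  finally show ?thesis by (simp add: algebra_simps)
qed

lemma bb_imc: "bounded_bilinear (\<lambda>a b::complex. Im (cnj a * b))"
proof (rule bounded_bilinear.intro)
  show "\<exists>K. \<forall>a b. norm (Im (cnj a * b)) \<le> norm a * norm b * K"
    by (rule exI[of _ 1]) (simp add: norm_Im_cnj_mult[simplified])
qed (simp_all add: algebra_simps)

lemma imc_swap: "Im (cnj b * a) = - Im (cnj a * b)"
  by (simp add: algebra_simps)

lemma arith_bound:
  fixes M s e e1 eta :: real
  assumes M: "M \<ge> 1" and s: "0 \<le> s" "s \<le> eta" and e1: "0 \<le> e1" "e1 \<le> eta"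
    and eta: "eta = e / (3 * (2 * pi * (M + 1)^2))" and e: "e > 0"
  shows "e1 * s * (2 * pi * M) + (M + 1) * s * (2 * pi * (e1 + M * s)) / 2 \<le> e * s"
proof -
  define c where "c = 2 * pi * (M + 1)^2"
  have c: "c > 0" using M by (simp add: c_def)
  have ce: "c * eta = e / 3" using c by (simp add: eta c_def[symmetric])
  have h1: "2 * pi * M * e1 \<le> c * eta"
  proof -
    have "2 * pi * M \<le> c" unfolding c_def using M by (simp add: power2_eq_square) (smt (verit) mult_le_cancel_left1 mult_mono pi_gt_zero)
    then show ?thesis using e1 M c by (intro mult_mono) auto
  qed
  have h2: "pi * (M + 1) * e1 \<le> c * eta"
  proof -
    have "pi * (M + 1) \<le> c" unfolding c_def using M by (simp add: power2_eq_square)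
    then show ?thesis using e1 M c by (intro mult_mono) auto
  qed
  have h3: "pi * (M + 1) * M * s \<le> c * eta"
  proof -
    have "pi * (M + 1) * M \<le> c" unfolding c_def using M by (simp add: power2_eq_square)
    then show ?thesis using s M c by (intro mult_mono) auto
  qed
  have "e1 * s * (2 * pi * M) + (M + 1) * s * (2 * pi * (e1 + M * s)) / 2 =
     s * (2 * pi * M * e1 + pi * (M + 1) * e1 + pi * (M + 1) * M * s)"
    by (simp add: algebra_simps)
  also have "\<dots> \<le> s * (c * eta + c * eta + c * eta)"
    using h1 h2 h3 s by (intro mult_left_mono) auto
  also have "\<dots> = e * s" using ce by simp
  finally show ?thesis .
qed

lemma abs_half: "\<bar>(a::real) + b / 2\<bar> \<le> \<bar>a\<bar> + \<bar>b\<bar> / 2"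
  by linarith

locale C1disc =
  fixes u :: "complex \<Rightarrow> complex" and U :: "complex \<Rightarrow> complex \<Rightarrow> complex"
  assumes uC1: "\<And>z. z \<in> cball 0 1 \<Longrightarrow> (u has_derivative U z) (at z within cball 0 1)"
    and U1: "continuous_on (cball 0 1) (\<lambda>z. U z 1)"
    and Ui: "continuous_on (cball 0 1) (\<lambda>z. U z \<i>)"
begin

lemma lin: "z \<in> cball 0 1 \<Longrightarrow> linear (U z)"
  using uC1 has_derivative_bounded_linear bounded_linear.linear by blast

lemma U_Uap: "z \<in> cball 0 1 \<Longrightarrow> U z w = Uap U z w"
  unfolding Uap_def using linear_expand[OF lin] by blast

lemma u_cont: "continuous_on (cball 0 1) u"
  using uC1 has_derivative_continuous continuous_on_eq_continuous_within by blast

lemma Uap_cont [continuous_intros]: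
  assumes "continuous_on S f" "continuous_on S g" "f ` S \<subseteq> cball 0 1"
  shows "continuous_on S (\<lambda>x. Uap U (f x) (g x))"
  unfolding Uap_def
  by (intro continuous_intros continuous_on_compose2[OF U1 assms(1) assms(3)]
       continuous_on_compose2[OF Ui assms(1) assms(3)] assms(2))

lemma bound: obtains M where "M \<ge> 1" "\<And>z. z \<in> cball 0 1 \<Longrightarrow> norm (U z 1) + norm (U z \<i>) \<le> M"
proof -
  have "compact ((\<lambda>z. norm (U z 1) + norm (U z \<i>)) ` cball 0 1)"
    by (intro compact_continuous_image compact_cball continuous_intros U1 Ui)
  then obtain B where B: "\<forall>x\<in>(\<lambda>z. norm (U z 1) + norm (U z \<i>)) ` cball 0 1. norm x \<le> B"
    using compact_imp_bounded bounded_iff by blast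
  show ?thesis
  proof (rule that[of "max B 1"])
    fix z :: complex assume "z \<in> cball 0 1"
    then have "norm (norm (U z 1) + norm (U z \<i>)) \<le> B" using B by blast
    then show "norm (U z 1) + norm (U z \<i>) \<le> max B 1" by simp
  qed simp
qed

lemma unif_diff:
  assumes "e > 0"
  obtains d where "d > 0" "\<And>z w. z \<in> cball 0 1 \<Longrightarrow> w \<in> cball 0 1 \<Longrightarrow> norm (w - z) < d \<Longrightarrow>
      norm (u w - u z - U z (w - z)) \<le> e * norm (w - z)"
    and "\<And>z w. z \<in> cball 0 1 \<Longrightarrow> w \<in> cball 0 1 \<Longrightarrow> norm (w - z) < d \<Longrightarrow>
      norm (U w 1 - U z 1) + norm (U w \<i> - U z \<i>) \<le> e"
proof -
  have uc1: "uniformly_continuous_on (cball 0 1) (\<lambda>z. U z 1)"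
    by (rule compact_uniformly_continuous[OF U1 compact_cball])
  have uci: "uniformly_continuous_on (cball 0 1) (\<lambda>z. U z \<i>)"
    by (rule compact_uniformly_continuous[OF Ui compact_cball])
  obtain d1 where d1: "d1 > 0" "\<And>x x'. x \<in> cball 0 1 \<Longrightarrow> x' \<in> cball 0 1 \<Longrightarrow> dist x' x < d1 \<Longrightarrow> dist (U x' 1) (U x 1) < e/2"
    using uc1[unfolded uniformly_continuous_on_def, rule_format, of "e/2"] assms by auto
  obtain d2 where d2: "d2 > 0" "\<And>x x'. x \<in> cball 0 1 \<Longrightarrow> x' \<in> cball 0 1 \<Longrightarrow> dist x' x < d2 \<Longrightarrow> dist (U x' \<i>) (U x \<i>) < e/2"
    using uci[unfolded uniformly_continuous_on_def, rule_format, of "e/2"] assms by auto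
  define d where "d = min d1 d2"
  have close: "norm (U w 1 - U z 1) + norm (U w \<i> - U z \<i>) \<le> e"
    if "z \<in> cball 0 1" "w \<in> cball 0 1" "norm (w - z) < d" for z w
  proof -
    have "norm (U w 1 - U z 1) < e/2" using d1(2)[OF that(1,2)] that(3) by (simp add: d_def dist_norm)
    moreover have "norm (U w \<i> - U z \<i>) < e/2" using d2(2)[OF that(1,2)] that(3) by (simp add: d_def dist_norm)
    ultimately show ?thesis by simp
  qed
  show ?thesis
  proof (rule that[of d])
    show "d > 0" using d1 d2 by (simp add: d_def)
  next
    fix z w :: complex assume z: "z \<in> cball 0 1" and w: "w \<in> cball 0 1" and zw: "norm (w - z) < d"
    let ?S = "closed_segment z w"
    have Ssub: "?S \<subseteq> cball 0 1" using z w by (simp add: closed_segment_subset convex_cball)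
    have der: "((\<lambda>p. u p - U z p) has_derivative (\<lambda>h. U p h - U z h)) (at p within ?S)" if "p \<in> ?S" for p
    proof -
      have "(u has_derivative U p) (at p within ?S)"
        using uC1[of p] Ssub that has_derivative_subset by blast
      moreover have "(U z has_derivative U z) (at p within ?S)"
        using lin[OF z] by (simp add: linear_imp_has_derivative has_derivative_at_withinI)
      ultimately show ?thesis by (rule has_derivative_diff)
    qed
    have onb: "onorm (\<lambda>h. U p h - U z h) \<le> e" if "p \<in> ?S" for p
    proof (rule onorm_le)
      fix h
      have p: "p \<in> cball 0 1" using that Ssub by blast
      have "norm (U p h - U z h) = norm (Uap U p h - Uap U z h)" using U_Uap[OF p] U_Uap[OF z] by simp
      also have "\<dots> \<le> (norm (U p 1 - U z 1) + norm (U p \<i> - U z \<i>)) * norm h" by (rule norm_Uap_diff_le)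
      also have "\<dots> \<le> e * norm h"
      proof (rule mult_right_mono[OF close[OF z p]])
        show "norm (p - z) < d" using segment_bound1[OF that] zw by linarith
      qed simp
      finally show "norm (U p h - U z h) \<le> e * norm h" .
    qed
    have "norm ((u w - U z w) - (u z - U z z)) \<le> e * norm (w - z)"
      by (rule differentiable_bound[OF convex_closed_segment der onb]) auto
    moreover have "u w - u z - U z (w - z) = (u w - U z w) - (u z - U z z)"
      using lin[OF z] by (simp add: linear_diff algebra_simps)
    ultimately show "norm (u w - u z - U z (w - z)) \<le> e * norm (w - z)" by (simp add: algebra_simps)
  next
    fix z w :: complex assume "z \<in> cball 0 1" "w \<in> cball 0 1" "norm (w - z) < d"
    then show "norm (U w 1 - U z 1) + norm (U w \<i> - U z \<i>) \<le> e" by (rule close)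
  qed
qed


definition "vv r t = u (complex_of_real r * cis (2 * pi * t))"
definition "QQ r t = Uap U (complex_of_real r * cis (2 * pi * t)) (\<i> * complex_of_real (2 * pi * r) * cis (2 * pi * t))"
definition "VR r t = Uap U (complex_of_real r * cis (2 * pi * t)) (cis (2 * pi * t))"
definition "AA r = integral {0..1} (\<lambda>t. Im (cnj (vv r t) * QQ r t)) / 2"
definition "BB r = integral {0..1} (\<lambda>t. Im (cnj (VR r t) * QQ r t))"

lemma inball: "r \<in> {0..1} \<Longrightarrow> complex_of_real r * cis (2 * pi * t) \<in> cball 0 1"
  by (simp add: norm_mult)

lemma inball_img: "r \<in> {0..1} \<Longrightarrow> (\<lambda>t. complex_of_real r * cis (2 * pi * t)) ` S \<subseteq> cball 0 1"
  using inball by blast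

lemma vv_cont: "r \<in> {0..1} \<Longrightarrow> continuous_on S (vv r)"
  unfolding vv_def
  by (rule continuous_on_compose2[OF u_cont _ inball_img]) (intro continuous_intros)

lemma QQ_cont: "r \<in> {0..1} \<Longrightarrow> continuous_on S (QQ r)"
  unfolding QQ_def by (intro continuous_intros inball_img)

lemma VR_cont: "r \<in> {0..1} \<Longrightarrow> continuous_on S (VR r)"
  unfolding VR_def by (intro continuous_intros inball_img)

lemma vv_deriv_at: "r \<in> {0..1} \<Longrightarrow> (vv r has_vector_derivative QQ r t) (at t)"
proof -
  assume r: "r \<in> {0..1}"
  let ?g = "\<lambda>t. complex_of_real r * cis (2 * pi * t)"
  have g: "(?g has_derivative (\<lambda>h. complex_of_real r * ((2 * pi * h) *\<^sub>R (\<i> * cis (2 * pi * t))))) (at t within UNIV)"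
    by (auto intro!: derivative_eq_intros)
  have "((\<lambda>t. u (?g t)) has_derivative (\<lambda>h. U (?g t) (complex_of_real r * ((2 * pi * h) *\<^sub>R (\<i> * cis (2 * pi * t)))))) (at t within UNIV)"
    by (rule has_derivative_in_compose2[OF uC1 inball_img[OF r] _ g]) auto
  moreover have "U (?g t) (complex_of_real r * ((2 * pi * h) *\<^sub>R (\<i> * cis (2 * pi * t)))) = h *\<^sub>R QQ r t" for h
  proof -
    have "complex_of_real r * ((2 * pi * h) *\<^sub>R (\<i> * cis (2 * pi * t))) = h *\<^sub>R (\<i> * complex_of_real (2 * pi * r) * cis (2 * pi * t))"
      by (simp add: scaleR_conv_of_real algebra_simps)
    then have "U (?g t) (complex_of_real r * ((2 * pi * h) *\<^sub>R (\<i> * cis (2 * pi * t)))) = U (?g t) (h *\<^sub>R (\<i> * complex_of_real (2 * pi * r) * cis (2 * pi * t)))"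
      by simp
    also have "\<dots> = h *\<^sub>R U (?g t) (\<i> * complex_of_real (2 * pi * r) * cis (2 * pi * t))"
      using lin[OF inball[OF r]] by (simp add: linear_scale)
    also have "\<dots> = h *\<^sub>R QQ r t"
      using U_Uap[OF inball[OF r]] by (simp add: QQ_def)
    finally show ?thesis .
  qed
  ultimately show ?thesis by (simp add: has_vector_derivative_def vv_def[abs_def])
qed

lemma vv_deriv: "r \<in> {0..1} \<Longrightarrow> (vv r has_vector_derivative QQ r t) (at t within S)"
  using vv_deriv_at has_vector_derivative_at_within by blast

lemma vv_periodic: "vv r 1 = vv r 0"
  by (simp add: vv_def)


lemma ibp:
  assumes r: "r \<in> {0..1}" and r0: "r0 \<in> {0..1}"
  shows "integral {0..1} (\<lambda>t. Im (cnj (vv r0 t) * (QQ r t - QQ r0 t))) =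
         integral {0..1} (\<lambda>t. Im (cnj (vv r t - vv r0 t) * QQ r0 t))"
proof -
  let ?D = "\<lambda>t. vv r t - vv r0 t"
  let ?phi = "\<lambda>t. Im (cnj (vv r0 t) * ?D t)"
  let ?phi' = "\<lambda>t. Im (cnj (vv r0 t) * (QQ r t - QQ r0 t)) + Im (cnj (QQ r0 t) * ?D t)"
  have "(?phi has_vector_derivative ?phi' t) (at t within {0..1})" for t
  proof -
    have "(?D has_vector_derivative (QQ r t - QQ r0 t)) (at t within {0..1})"
      by (intro has_vector_derivative_diff vv_deriv r r0)
    from bounded_bilinear.has_vector_derivative[OF bb_imc vv_deriv[OF r0] this]
    show ?thesis by simp
  qed
  then have "(?phi' has_integral (?phi 1 - ?phi 0)) {0..1}"
    by (intro fundamental_theorem_of_calculus) auto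
  then have "(?phi' has_integral 0) {0..1}" by (simp add: vv_periodic)
  moreover have i1: "(\<lambda>t. Im (cnj (vv r0 t) * (QQ r t - QQ r0 t))) integrable_on {0..1}"
    by (intro integrable_continuous_interval continuous_intros vv_cont QQ_cont r r0)
  moreover have i2: "(\<lambda>t. Im (cnj (QQ r0 t) * ?D t)) integrable_on {0..1}"
    by (intro integrable_continuous_interval continuous_intros vv_cont QQ_cont r r0)
  ultimately have "integral {0..1} (\<lambda>t. Im (cnj (vv r0 t) * (QQ r t - QQ r0 t))) + integral {0..1} (\<lambda>t. Im (cnj (QQ r0 t) * ?D t)) = 0"
    using integral_add[OF i1 i2] by (simp add: integral_unique)
  moreover have "integral {0..1} (\<lambda>t. Im (cnj (QQ r0 t) * ?D t)) = - integral {0..1} (\<lambda>t. Im (cnj (?D t) * QQ r0 t))"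
  proof -
    have "(\<lambda>t. Im (cnj (QQ r0 t) * ?D t)) = (\<lambda>t. - Im (cnj (?D t) * QQ r0 t))"
      by (rule ext, rule imc_swap)
    then show ?thesis by (simp only: integral_neg)
  qed
  ultimately show ?thesis by simp
qed


lemma key_identity:
  assumes r: "r \<in> {0..1}" and r0: "r0 \<in> {0..1}"
  shows "AA r - AA r0 - (r - r0) * BB r0 = integral {0..1} (\<lambda>t.
     Im (cnj (vv r t - vv r0 t - (r - r0) *\<^sub>R VR r0 t) * QQ r0 t) +
     Im (cnj (vv r t - vv r0 t) * (QQ r t - QQ r0 t)) / 2)"
proof -
  let ?D = "\<lambda>t. vv r t - vv r0 t"
  define fA where "fA = (\<lambda>t. Im (cnj (vv r t) * QQ r t))"
  define fB where "fB = (\<lambda>t. Im (cnj (vv r0 t) * QQ r0 t))"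
  define fC where "fC = (\<lambda>t. Im (cnj (?D t) * QQ r0 t))"
  define fD where "fD = (\<lambda>t. Im (cnj (vv r0 t) * (QQ r t - QQ r0 t)))"
  define fE where "fE = (\<lambda>t. Im (cnj (?D t) * (QQ r t - QQ r0 t)))"
  define fV where "fV = (\<lambda>t. Im (cnj (VR r0 t) * QQ r0 t))"
  have cB: "fB integrable_on {0..1}" unfolding fB_def
    by (intro integrable_continuous_interval continuous_intros vv_cont QQ_cont VR_cont r r0)
  have cC: "fC integrable_on {0..1}" unfolding fC_def
    by (intro integrable_continuous_interval continuous_intros vv_cont QQ_cont VR_cont r r0)
  have cD: "fD integrable_on {0..1}" unfolding fD_def
    by (intro integrable_continuous_interval continuous_intros vv_cont QQ_cont VR_cont r r0)
  have cE: "fE integrable_on {0..1}" unfolding fE_def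
    by (intro integrable_continuous_interval continuous_intros vv_cont QQ_cont VR_cont r r0)
  have cV: "fV integrable_on {0..1}" unfolding fV_def
    by (intro integrable_continuous_interval continuous_intros vv_cont QQ_cont VR_cont r r0)
  have "fA = (\<lambda>t. fB t + fC t + fD t + fE t)"
    by (rule ext) (simp add: fA_def fB_def fC_def fD_def fE_def algebra_simps)
  then have IA: "integral {0..1} fA = integral {0..1} fB + integral {0..1} fC + integral {0..1} fD + integral {0..1} fE"
    using cB cC cD cE by (simp add: integral_add integrable_add)
  have "(\<lambda>t. Im (cnj (vv r t - vv r0 t - (r - r0) *\<^sub>R VR r0 t) * QQ r0 t) +
     Im (cnj (vv r t - vv r0 t) * (QQ r t - QQ r0 t)) / 2) = (\<lambda>t. fC t - (r - r0) * fV t + fE t / 2)"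
    by (rule ext) (simp add: fC_def fV_def fE_def algebra_simps scaleR_conv_of_real)
  moreover have "integral {0..1} (\<lambda>t. fC t - (r - r0) * fV t + fE t / 2) =
      integral {0..1} fC - (r - r0) * integral {0..1} fV + integral {0..1} fE / 2"
  proof (rule integral_unique)
    show "((\<lambda>t. fC t - (r - r0) * fV t + fE t / 2) has_integral
      integral {0..1} fC - (r - r0) * integral {0..1} fV + integral {0..1} fE / 2) {0..1}"
      by (intro has_integral_add has_integral_diff has_integral_mult_right has_integral_divide integrable_integral cC cV cE)
  qed
  moreover have "integral {0..1} fD = integral {0..1} fC"
    unfolding fD_def fC_def by (rule ibp[OF r r0])
  moreover have "AA r = integral {0..1} fA / 2" "AA r0 = integral {0..1} fB / 2" "BB r0 = integral {0..1} fV"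
    by (simp_all add: AA_def BB_def fA_def fB_def fV_def)
  ultimately show ?thesis using IA by (simp add: field_simps)
qed


lemma pointwise_bound:
  assumes r: "r \<in> {0..1}" and r0: "r0 \<in> {0..1}"
    and M: "\<And>z. z \<in> cball 0 1 \<Longrightarrow> norm (U z 1) + norm (U z \<i>) \<le> M"
    and e1: "0 \<le> e1" "e1 \<le> 1"
    and d1: "\<And>z w. z \<in> cball 0 1 \<Longrightarrow> w \<in> cball 0 1 \<Longrightarrow> norm (w - z) < d \<Longrightarrow>
      norm (u w - u z - U z (w - z)) \<le> e1 * norm (w - z)"
    and d2: "\<And>z w. z \<in> cball 0 1 \<Longrightarrow> w \<in> cball 0 1 \<Longrightarrow> norm (w - z) < d \<Longrightarrow>
      norm (U w 1 - U z 1) + norm (U w \<i> - U z \<i>) \<le> e1"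
    and rd: "\<bar>r - r0\<bar> < d"
  shows "\<bar>Im (cnj (vv r t - vv r0 t - (r - r0) *\<^sub>R VR r0 t) * QQ r0 t) +
     Im (cnj (vv r t - vv r0 t) * (QQ r t - QQ r0 t)) / 2\<bar>
    \<le> e1 * \<bar>r - r0\<bar> * (2 * pi * M) + (M + 1) * \<bar>r - r0\<bar> * (2 * pi * (e1 + M * \<bar>r - r0\<bar>)) / 2"
proof -
  let ?c = "cis (2 * pi * t)"
  let ?s = "\<bar>r - r0\<bar>"
  define z0 where "z0 = complex_of_real r0 * ?c"
  define z where "z = complex_of_real r * ?c"
  have z0b: "z0 \<in> cball 0 1" using inball[OF r0] by (simp add: z0_def)
  have zb: "z \<in> cball 0 1" using inball[OF r] by (simp add: z_def)
  have zz: "z - z0 = (r - r0) *\<^sub>R ?c" by (simp add: z_def z0_def scaleR_conv_of_real algebra_simps)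
  have nzz: "norm (z - z0) = ?s" by (simp add: zz)
  have Mnn: "0 \<le> M" using M[OF z0b] by (smt (verit) norm_ge_zero)
  have P1: "norm (vv r t - vv r0 t - (r - r0) *\<^sub>R VR r0 t) \<le> e1 * ?s"
  proof -
    have "U z0 (z - z0) = U z0 ((r - r0) *\<^sub>R ?c)" by (simp only: zz)
    also have "\<dots> = (r - r0) *\<^sub>R U z0 ?c" by (rule linear_scale[OF lin[OF z0b]])
    also have "\<dots> = (r - r0) *\<^sub>R VR r0 t" using U_Uap[OF z0b] by (simp add: VR_def z0_def)
    finally have "U z0 (z - z0) = (r - r0) *\<^sub>R VR r0 t" .
    then show ?thesis using d1[OF z0b zb] rd nzz by (simp add: vv_def z_def z0_def)
  qed
  have P2: "norm (QQ r0 t) \<le> 2 * pi * M"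
  proof -
    have "norm (QQ r0 t) \<le> M * (2 * pi * r0)"
      unfolding QQ_def
      by (rule order_trans[OF norm_Uap_le]) (use M[OF inball[OF r0]] r0 in \<open>auto simp: norm_mult intro!: mult_right_mono\<close>)
    also have "\<dots> \<le> 2 * pi * M" using r0 Mnn by (simp add: mult_left_le mult_left_mono)
    finally show ?thesis .
  qed
  have nVR: "norm (VR r0 t) \<le> M"
    unfolding VR_def
    by (rule order_trans[OF norm_Uap_le]) (use M[OF inball[OF r0]] in auto)
  have P3: "norm (vv r t - vv r0 t) \<le> (M + 1) * ?s"
  proof -
    have "norm (vv r t - vv r0 t) \<le> norm (vv r t - vv r0 t - (r - r0) *\<^sub>R VR r0 t) + norm ((r - r0) *\<^sub>R VR r0 t)"
      using norm_triangle_ineq[of "vv r t - vv r0 t - (r - r0) *\<^sub>R VR r0 t" "(r - r0) *\<^sub>R VR r0 t"] by simp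
    also have "\<dots> \<le> e1 * ?s + ?s * M"
      using P1 nVR by (intro add_mono) (auto intro: mult_left_mono)
    also have "\<dots> \<le> (M + 1) * ?s" using e1 by (simp add: algebra_simps mult_left_le_one_le)
    finally show ?thesis .
  qed
  have P4: "norm (QQ r t - QQ r0 t) \<le> 2 * pi * (e1 + M * ?s)"
  proof -
    define w where "w = \<i> * complex_of_real (2 * pi * r) * ?c"
    define w0 where "w0 = \<i> * complex_of_real (2 * pi * r0) * ?c"
    have nw: "norm w \<le> 2 * pi" using r by (simp add: w_def norm_mult)
    have nww: "norm (w - w0) = 2 * pi * ?s"
    proof -
      have "w - w0 = \<i> * complex_of_real (2 * pi * (r - r0)) * ?c" by (simp add: w_def w0_def algebra_simps)
      then show ?thesis by (simp add: norm_mult abs_mult of_real_diff[symmetric] del: of_real_diff)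
    qed
    have "QQ r t - QQ r0 t = (Uap U z w - Uap U z0 w) + Uap U z0 (w - w0)"
      by (simp add: QQ_def z_def z0_def w_def w0_def Uap_minus[symmetric])
    then have "norm (QQ r t - QQ r0 t) \<le> norm (Uap U z w - Uap U z0 w) + norm (Uap U z0 (w - w0))"
      by (simp add: norm_triangle_ineq)
    also have "\<dots> \<le> e1 * (2 * pi) + M * (2 * pi * ?s)"
    proof (rule add_mono)
      have "norm (Uap U z w - Uap U z0 w) \<le> (norm (U z 1 - U z0 1) + norm (U z \<i> - U z0 \<i>)) * norm w"
        by (rule norm_Uap_diff_le)
      also have "\<dots> \<le> e1 * (2 * pi)"
        using d2[OF z0b zb] rd nzz nw e1 by (intro mult_mono) auto
      finally show "norm (Uap U z w - Uap U z0 w) \<le> e1 * (2 * pi)" .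
      have "norm (Uap U z0 (w - w0)) \<le> (norm (U z0 1) + norm (U z0 \<i>)) * norm (w - w0)"
        by (rule norm_Uap_le)
      also have "\<dots> \<le> M * (2 * pi * ?s)"
        using M[OF z0b] nww by (metis mult_right_mono norm_ge_zero)
      finally show "norm (Uap U z0 (w - w0)) \<le> M * (2 * pi * ?s)" .
    qed
    also have "\<dots> = 2 * pi * (e1 + M * ?s)" by (simp add: algebra_simps)
    finally show ?thesis .
  qed
  have "\<bar>Im (cnj (vv r t - vv r0 t - (r - r0) *\<^sub>R VR r0 t) * QQ r0 t) +
     Im (cnj (vv r t - vv r0 t) * (QQ r t - QQ r0 t)) / 2\<bar>
    \<le> \<bar>Im (cnj (vv r t - vv r0 t - (r - r0) *\<^sub>R VR r0 t) * QQ r0 t)\<bar> +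
     \<bar>Im (cnj (vv r t - vv r0 t) * (QQ r t - QQ r0 t))\<bar> / 2"
    by (rule abs_half)
  also have "\<dots> \<le> norm (vv r t - vv r0 t - (r - r0) *\<^sub>R VR r0 t) * norm (QQ r0 t) +
      norm (vv r t - vv r0 t) * norm (QQ r t - QQ r0 t) / 2"
    by (intro add_mono divide_right_mono norm_Im_cnj_mult) auto
  also have "\<dots> \<le> e1 * ?s * (2 * pi * M) + (M + 1) * ?s * (2 * pi * (e1 + M * ?s)) / 2"
    using P1 P2 P3 P4 e1 Mnn
    by (intro add_mono divide_right_mono mult_mono) auto
  finally show ?thesis .
qed


lemma AA_deriv:
  assumes r0: "r0 \<in> {0..1}"
  shows "(AA has_real_derivative BB r0) (at r0 within {0..1})"
  unfolding has_field_derivative_def has_derivative_within_alt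
proof (intro conjI allI impI)
  show "bounded_linear ((*) (BB r0))" by (rule bounded_linear_mult_right)
  fix e :: real assume e: "e > 0"
  obtain M where M1: "M \<ge> 1" and M: "\<And>z. z \<in> cball 0 1 \<Longrightarrow> norm (U z 1) + norm (U z \<i>) \<le> M"
    using bound by blast
  define eta where "eta = e / (3 * (2 * pi * (M + 1)^2))"
  have eta0: "eta > 0" using e M1 by (simp add: eta_def)
  define e1 where "e1 = min 1 eta"
  have e1: "0 < e1" "e1 \<le> 1" "e1 \<le> eta" using eta0 by (auto simp: e1_def)
  obtain d where d: "d > 0"
    and d1: "\<And>z w. z \<in> cball 0 1 \<Longrightarrow> w \<in> cball 0 1 \<Longrightarrow> norm (w - z) < d \<Longrightarrow>
      norm (u w - u z - U z (w - z)) \<le> e1 * norm (w - z)"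
    and d2: "\<And>z w. z \<in> cball 0 1 \<Longrightarrow> w \<in> cball 0 1 \<Longrightarrow> norm (w - z) < d \<Longrightarrow>
      norm (U w 1 - U z 1) + norm (U w \<i> - U z \<i>) \<le> e1"
    using unif_diff[OF e1(1)] by metis
  show "\<exists>d>0. \<forall>y\<in>{0..1}. norm (y - r0) < d \<longrightarrow>
      norm (AA y - AA r0 - BB r0 * (y - r0)) \<le> e * norm (y - r0)"
  proof (intro exI[of _ "min d eta"] conjI ballI impI)
    show "min d eta > 0" using d eta0 by simp
    fix r assume r: "r \<in> {0..1}" and rr: "norm (r - r0) < min d eta"
    let ?s = "\<bar>r - r0\<bar>"
    have rd: "?s < d" and re: "?s \<le> eta" using rr by auto
    let ?f = "\<lambda>t. Im (cnj (vv r t - vv r0 t - (r - r0) *\<^sub>R VR r0 t) * QQ r0 t) +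
     Im (cnj (vv r t - vv r0 t) * (QQ r t - QQ r0 t)) / 2"
    have "norm (integral {0..1} ?f) \<le> (e1 * ?s * (2 * pi * M) + (M + 1) * ?s * (2 * pi * (e1 + M * ?s)) / 2) * (1 - 0)"
    proof (rule integral_bound)
      show "continuous_on {0..1} ?f"
        by (intro continuous_intros vv_cont QQ_cont VR_cont r r0) auto
      fix t assume "t \<in> {0..1::real}"
      show "norm (?f t) \<le> e1 * ?s * (2 * pi * M) + (M + 1) * ?s * (2 * pi * (e1 + M * ?s)) / 2"
        using pointwise_bound[OF r r0 M _ e1(2) d1 d2 rd] e1 by simp
    qed simp
    also have "\<dots> \<le> e * ?s"
      using arith_bound[OF M1 _ re _ e1(3) eta_def e] e1 by simp
    finally show "norm (AA r - AA r0 - BB r0 * (r - r0)) \<le> e * norm (r - r0)"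
      using key_identity[OF r r0] by (simp add: mult.commute)
  qed
qed

lemma AA_FTC: "(BB has_integral (AA 1 - AA 0)) {0..1}"
  by (rule fundamental_theorem_of_calculus) (auto intro!: has_real_derivative_iff_has_vector_derivative[THEN iffD1] AA_deriv)

lemma AA0: "AA 0 = 0"
proof -
  have "QQ 0 t = 0" for t by (simp add: QQ_def Uap_def)
  then show ?thesis by (simp add: AA_def)
qed

end


lemma rot_Uap: "Im (cnj (Uap U z (cis a)) * Uap U z (\<i> * complex_of_real c * cis a)) = c * Im (cnj (U z 1) * U z \<i>)"
proof -
  have "Im (cnj (Uap U z (cis a)) * Uap U z (\<i> * complex_of_real c * cis a)) =
     c * (cos a * cos a + sin a * sin a) * Im (cnj (U z 1) * U z \<i>)"
    apply (simp add: Uap_def cis.sel algebra_simps)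
    using sin_cos_squared_add3[of a] by algebra
  then show ?thesis by (simp add: sin_cos_squared_add3)
qed

context C1disc begin

lemma BB_eq: "BB r = integral {0..1} (\<lambda>t. 2 * pi * r * jac_det (U (complex_of_real r * cis (2 * pi * t))))"
  unfolding BB_def VR_def QQ_def jac_det_def rot_Uap by simp

lemma pullback_eq_AA1: "integral (cball 0 1) (\<lambda>z. jac_det (U z)) = AA 1"
proof -
  have c: "continuous_on (cball 0 1) (\<lambda>z. jac_det (U z))"
    unfolding jac_det_def by (intro continuous_intros U1 Ui)
  have BBf: "BB = (\<lambda>r. integral {0..1} (\<lambda>t. 2 * pi * r * jac_det (U (complex_of_real r * cis (2 * pi * t)))))"
    by (rule ext) (rule BB_eq)
  from polar_complex[OF c]
  have "integral (cball 0 1) (\<lambda>z. jac_det (U z)) = integral {0..1} BB"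
    by (simp add: BBf)
  also have "\<dots> = AA 1 - AA 0" using AA_FTC by (simp add: integral_unique)
  finally show ?thesis by (simp add: AA0)
qed

end

lemma final_ineq:
  fixes \<rho> d L i :: real
  assumes "1 \<le> \<rho>" "\<rho> \<le> 1 + d" "\<bar>i\<bar> \<le> \<rho> * L" "0 \<le> L"
  shows "\<bar>i * (1 - 1 / \<rho>^2) / 2\<bar> \<le> L * d"
proof -
  have r0: "\<rho> > 0" using assms by simp
  have f: "0 \<le> 1 - 1 / \<rho>^2" using assms by (simp add: field_simps)
  have "\<bar>i * (1 - 1 / \<rho>^2) / 2\<bar> = \<bar>i\<bar> * (1 - 1 / \<rho>^2) / 2" using f by (simp add: abs_mult)
  also have "\<dots> \<le> \<rho> * L * (1 - 1 / \<rho>^2) / 2" using assms f by (intro divide_right_mono mult_right_mono) auto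
  also have "\<dots> = L * ((\<rho> - 1) * (\<rho> + 1) / \<rho>) / 2" using r0 by (simp add: field_simps power2_eq_square)
  also have "\<dots> \<le> L * (d * 2) / 2"
  proof -
    have "(\<rho> - 1) * (\<rho> + 1) \<le> d * (2 * \<rho>)"
      by (rule mult_mono) (use assms in auto)
    then have "(\<rho> - 1) * (\<rho> + 1) / \<rho> \<le> d * 2"
      using r0 by (simp add: pos_divide_le_eq mult_ac)
    then show ?thesis using assms by (intro divide_right_mono mult_left_mono) auto
  qed
  finally show ?thesis by simp
qed

theorem lemma4p1:
  fixes \<delta> :: real
    and x :: "real \<Rightarrow> complex" and x' :: "real \<Rightarrow> complex"
    and u :: "complex \<Rightarrow> complex" and U :: "complex \<Rightarrow> complex \<Rightarrow> complex"
  assumes "\<delta> > 0"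
    and x_C1: "\<forall>t\<in>{0..1}. (x has_vector_derivative x' t) (at t within {0..1})"
    and x'_cont: "continuous_on {0..1} x'"
    and x_closed: "x 0 = x 1"
    and x_annulus: "\<forall>t\<in>{0..1}. 1 \<le> norm (x t) \<and> norm (x t) \<le> 1 + \<delta>"
    and u_C1: "\<forall>z\<in>cball 0 1. (u has_derivative U z) (at z within cball 0 1)"
    and U_cont: "continuous_on (cball 0 1) (\<lambda>z. U z 1)" "continuous_on (cball 0 1) (\<lambda>z. U z \<i>)"
    and u_cap: "\<forall>t\<in>{0..1}. u (cis (2 * pi * t)) = x t"
  shows "\<bar>pullback_omega_integral U - pi * Re (winding_number x 0)\<bar>
           \<le> integral {0..1} (\<lambda>t. norm (x' t)) * \<delta>"
proof -
  interpret C1disc u U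
    by unfold_locales (use u_C1 U_cont in auto)
  have xcont: "continuous_on {0..1} x"
    using x_C1 by (metis continuous_on_eq_continuous_within has_vector_derivative_continuous)
  have xnz: "x t \<noteq> 0" if "t \<in> {0..1}" for t using x_annulus that by force
  have vx: "vv 1 t = x t" if "t \<in> {0..1}" for t using u_cap that by (simp add: vv_def)
  have Qx: "QQ 1 t = x' t" if t: "t \<in> {0..1}" for t
  proof -
    have "(x has_vector_derivative QQ 1 t) (at t within {0..1})"
      by (rule has_vector_derivative_transform[OF t _ vv_deriv]) (use vx in auto)
    then show ?thesis
      using vector_derivative_unique_within_closed_interval[of 0 1 t x] x_C1 t by auto
  qed
  have A1: "AA 1 = integral {0..1} (\<lambda>t. Im (cnj (x t) * x' t)) / 2"
  proof -
    have "integral {0..1} (\<lambda>t. Im (cnj (vv 1 t) * QQ 1 t)) = integral {0..1} (\<lambda>t. Im (cnj (x t) * x' t))"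
      by (rule integral_cong) (simp add: vx Qx)
    then show ?thesis unfolding AA_def by simp
  qed
  have P: "pullback_omega_integral U = integral {0..1} (\<lambda>t. Im (cnj (x t) * x' t)) / 2"
    unfolding pullback_omega_integral_def pullback_eq_AA1 A1 ..
  have dat: "(x has_vector_derivative x' t) (at t)" if "t \<in> {0<..<1}" for t
  proof -
    have "at t within {0..1} = at t" using that by (intro at_within_interior) auto
    moreover have "t \<in> {0..1}" using that by auto
    ultimately show ?thesis using x_C1 by metis
  qed
  have vp: "valid_path x"
    unfolding valid_path_def piecewise_C1_differentiable_on_def
  proof (intro conjI exI[of _ "{0,1}"])
    show "continuous_on {0..1} x" by (rule xcont)
    have "{0..1::real} - {0,1} = {0<..<1}" by auto
    moreover have "x C1_differentiable_on {0<..<1}"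
      unfolding C1_differentiable_on_eq
    proof
      show "\<forall>t\<in>{0<..<1}. x differentiable at t"
        using dat differentiableI_vector by blast
      have "continuous_on {0<..<1} x'" using x'_cont by (rule continuous_on_subset) auto
      then show "continuous_on {0<..<1} (\<lambda>t. vector_derivative x (at t))"
        by (rule continuous_on_eq) (use dat vector_derivative_at in \<open>metis greaterThanLessThan_iff\<close>)
    qed
    ultimately show "x C1_differentiable_on {0..1} - {0, 1}" by simp
  qed simp
  have nimg: "0 \<notin> path_image x" using xnz by (auto simp: path_image_def)
  have wn: "winding_number x 0 = 1/(2*pi*\<i>) * integral {0..1} (\<lambda>t. x' t / x t)"
  proof -
    have "winding_number x 0 = 1/(2*pi*\<i>) * integral {0..1} (\<lambda>t. 1 / x t * vector_derivative x (at t))"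
      using winding_number_valid_path[OF vp nimg] by (simp add: contour_integral_integral)
    also have "integral {0..1} (\<lambda>t. 1 / x t * vector_derivative x (at t)) = integral {0..1} (\<lambda>t. x' t / x t)"
    proof (rule integral_spike[of "{0,1}"])
      fix t :: real assume "t \<in> {0..1} - {0,1}"
      then have "t \<in> {0<..<1}" by auto
      then have "vector_derivative x (at t) = x' t" using dat vector_derivative_at by blast
      then show "x' t / x t = 1 / x t * vector_derivative x (at t)" by simp
    qed auto
    finally show ?thesis .
  qed
  have icont: "continuous_on {0..1} (\<lambda>t. x' t / x t)"
    by (intro continuous_intros xcont x'_cont) (use xnz in auto)
  have "((\<lambda>t. x' t / x t) has_integral integral {0..1} (\<lambda>t. x' t / x t)) {0..1}"
    by (intro integrable_integral integrable_continuous_interval icont)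
  from has_integral_linear[OF this bounded_linear_Im]
  have ImH: "((\<lambda>t. Im (x' t / x t)) has_integral Im (integral {0..1} (\<lambda>t. x' t / x t))) {0..1}"
    by (simp add: o_def)
  then have ImI: "Im (integral {0..1} (\<lambda>t. x' t / x t)) = integral {0..1} (\<lambda>t. Im (cnj (x t) * x' t) / (norm (x t))^2)"
  proof -
    have "Im (x' t / x t) = Im (cnj (x t) * x' t) / (norm (x t))^2" for t
      by (simp add: Im_divide cmod_power2 algebra_simps)
    then show ?thesis using ImH by (simp add: integral_unique)
  qed
  have W: "pi * Re (winding_number x 0) = integral {0..1} (\<lambda>t. Im (cnj (x t) * x' t) / (norm (x t))^2) / 2"
  proof -
    have "Re (winding_number x 0) = Im (integral {0..1} (\<lambda>t. x' t / x t)) / (2 * pi)"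
      unfolding wn by (simp add: Re_divide power2_eq_square field_simps)
    then show ?thesis unfolding ImI by simp
  qed
  let ?f = "\<lambda>t. Im (cnj (x t) * x' t) * (1 - 1 / (norm (x t))^2) / 2"
  have fc: "continuous_on {0..1} ?f"
    by (intro continuous_intros xcont x'_cont) (use xnz in auto)
  have i1: "(\<lambda>t. Im (cnj (x t) * x' t)) integrable_on {0..1}"
    by (intro integrable_continuous_interval continuous_intros xcont x'_cont)
  have i2: "(\<lambda>t. Im (cnj (x t) * x' t) / (norm (x t))^2) integrable_on {0..1}"
    by (intro integrable_continuous_interval continuous_intros xcont x'_cont) (use xnz in auto)
  have D: "pullback_omega_integral U - pi * Re (winding_number x 0) = integral {0..1} ?f"
  proof -
    have "integral {0..1} ?f = integral {0..1} (\<lambda>t. Im (cnj (x t) * x' t) / 2 - Im (cnj (x t) * x' t) / (norm (x t))^2 / 2)"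
      by (rule integral_cong) (simp add: right_diff_distrib diff_divide_distrib)
    also have "\<dots> = integral {0..1} (\<lambda>t. Im (cnj (x t) * x' t)) / 2 - integral {0..1} (\<lambda>t. Im (cnj (x t) * x' t) / (norm (x t))^2) / 2"
    proof (rule integral_unique)
      show "((\<lambda>t. Im (cnj (x t) * x' t) / 2 - Im (cnj (x t) * x' t) / (norm (x t))^2 / 2) has_integral
        integral {0..1} (\<lambda>t. Im (cnj (x t) * x' t)) / 2 - integral {0..1} (\<lambda>t. Im (cnj (x t) * x' t) / (norm (x t))^2) / 2) {0..1}"
        by (intro has_integral_diff has_integral_divide integrable_integral i1 i2)
    qed
    finally show ?thesis using P W by simp
  qed
  have "norm (integral {0..1} ?f) \<le> integral {0..1} (\<lambda>t. norm (x' t) * \<delta>)"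
  proof (rule integral_norm_bound_integral)
    show "?f integrable_on {0..1}" by (rule integrable_continuous_interval[OF fc])
    show "(\<lambda>t. norm (x' t) * \<delta>) integrable_on {0..1}"
      by (intro integrable_continuous_interval continuous_intros x'_cont)
    fix t :: real assume t: "t \<in> {0..1}"
    have a: "1 \<le> norm (x t)" "norm (x t) \<le> 1 + \<delta>" using x_annulus t by auto
    have b: "\<bar>Im (cnj (x t) * x' t)\<bar> \<le> norm (x t) * norm (x' t)" by (rule norm_Im_cnj_mult)
    show "norm (?f t) \<le> norm (x' t) * \<delta>"
      using final_ineq[OF a b norm_ge_zero] by simp
  qed
  also have "\<dots> = integral {0..1} (\<lambda>t. norm (x' t)) * \<delta>" by simp
  finally show ?thesis using D by simp
qed

end
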